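(* Assume conditions (C1) and (C3) hold, and that either (a) $A$ is $L$-Lipschitz continuous and $r$-strongly monotone and $B$ is maximal monotone, or (b) $A$ is $L$-Lipschitz continuous and monotone and $B$ is maximal monotone and $r$-strongly monotone (for some $r>0$). Then the sequence $\{x_n\}$ generated by Algorithm 3.1 converges strongly to a point $p\in\Omega$.
   Context: Let $H$ be a real Hilbert space, $A:H\to H$ a single-valued mapping and $B:H\to 2^H$ a set-valued mapping, and let $\Omega:=(A+B)^{-1}(0)=\{x\in H:\ 0\in Ax+Bx\}$. Algorithm 3.1 is the following iteration. Fix $x_0,x_1\in H$, $\mu\in(0,1)$, $\lambda_1>0$, real sequences $\{\alpha_n\},\{\beta_n\},\{\theta_n\}$ and nonnegative real sequences $\{\mu_n\},\{p_n\}$. For $n=1,2,\dots$ compute $w_n=x_n+\alpha_n(x_n-x_{n-1})$, $z_n=x_n+\beta_n(x_n-x_{n-1})$, $y_n=(I+\lambda_nB)^{-1}(I-\lambda_nA)w_n$, and set $\lambda_{n+1}=\min\{(\mu_n+\mu)\|w_n-y_n\|/\|Aw_n-Ay_n\|,\ \lambda_n+p_n\}$ if $Aw_n\neq Ay_n$, and $\lambda_{n+1}=\lambda_n+p_n$ otherwise. If $w_n=y_n$ the algorithm stops (then $y_n\in\Omega$). Otherwise set $x_{n+1}=(1-\theta_n)z_n+\theta_n\big(y_n-\lambda_n(Ay_n-Aw_n)\big)$ and continue. Here $I$ is the identity and $(I+\lambda B)^{-1}$ is the resolvent of $B$. Throughout, it is assumed that the algorithm does not stop, so that infinite sequences $\{x_n\},\{w_n\},\{z_n\},\{y_n\},\{\lambda_n\}$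 are generated. Condition (C1): $\Omega\neq\emptyset$. Condition (C3): there is $\varepsilon\in(1,\infty)$ such that (i) $0\le\alpha_n\le1$; (ii) $0\le\beta_n\le\beta_{n+1}\le\beta<\frac{3+2\varepsilon-\sqrt{8\varepsilon+17}}{2\varepsilon}$ for some constant $\beta$; (iii) $0<\theta<\theta_n\le\theta_{n+1}\le\frac{1}{1+\varepsilon}$ for some constant $\theta$; (iv) $a_n:=(1-\theta_n)\beta_n+\theta_n\alpha_n$ is non-decreasing; (v) $\sum_{n=1}^\infty p_n<\infty$ and $\lim_{n\to\infty}\mu_n=0$. A set-valued $B$ is $r$-strongly monotone if $\langle u-v,x-y\rangle\ge r\|x-y\|^2$ whenever $u\in Bx$, $v\in By$; a single-valued $A$ is $r$-strongly monotone if $\langle Ax-Ay,x-y\rangle\ge r\|x-y\|^2$ for all $x,y$. *)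

theory Defs
  imports "HOL-Analysis.Analysis"
begin

definition monotone_op :: "('a::real_inner \<Rightarrow> 'a) \<Rightarrow> bool" where
  "monotone_op A \<longleftrightarrow> (\<forall>x y. inner (A x - A y) (x - y) \<ge> 0)"

definition strongly_monotone_op :: "real \<Rightarrow> ('a::real_inner \<Rightarrow> 'a) \<Rightarrow> bool" where
  "strongly_monotone_op r A \<longleftrightarrow> (\<forall>x y. inner (A x - A y) (x - y) \<ge> r * (norm (x - y))\<^sup>2)"

definition monotone_setop :: "('a::real_inner \<Rightarrow> 'a set) \<Rightarrow> bool" where
  "monotone_setop B \<longleftrightarrow> (\<forall>x y u v. u \<in> B x \<longrightarrow> v \<in> B y \<longrightarrow> inner (u - v) (x - y) \<ge> 0)"

definition strongly_monotone_setop :: "real \<Rightarrow> ('a::real_inner \<Rightarrow> 'a set) \<Rightarrow> bool" where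
  "strongly_monotone_setop r B \<longleftrightarrow>
     (\<forall>x y u v. u \<in> B x \<longrightarrow> v \<in> B y \<longrightarrow> inner (u - v) (x - y) \<ge> r * (norm (x - y))\<^sup>2)"

definition maximal_monotone :: "('a::real_inner \<Rightarrow> 'a set) \<Rightarrow> bool" where
  "maximal_monotone B \<longleftrightarrow> monotone_setop B \<and>
     (\<forall>C. monotone_setop C \<and> (\<forall>x. B x \<subseteq> C x) \<longrightarrow> C = B)"

definition zeros_sum :: "('a::real_vector \<Rightarrow> 'a) \<Rightarrow> ('a \<Rightarrow> 'a set) \<Rightarrow> 'a set" where
  "zeros_sum A B = {x. \<exists>u \<in> B x. A x + u = 0}"

text \<open>Membership in the (set-valued) resolvent: y \<in> (I + l B)^{-1} v iff v \<in> y + l B y.\<close>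
definition in_resolvent :: "('a::real_vector \<Rightarrow> 'a set) \<Rightarrow> real \<Rightarrow> 'a \<Rightarrow> 'a \<Rightarrow> bool" where
  "in_resolvent B l v y \<longleftrightarrow> v - y \<in> (\<lambda>u. l *\<^sub>R u) ` B y"

end

theory Submission
  imports Defs
begin

lemma nsq_comb: fixes a b :: "'a::real_inner"
  shows "norm ((1-t) *\<^sub>R a + t *\<^sub>R b)^2 = (1-t)*norm a^2 + t*norm b^2 - t*(1-t)*norm (a-b)^2"
  by (simp add: power2_norm_eq_inner inner_diff_left inner_diff_right inner_add_left inner_add_right inner_commute algebra_simps power2_eq_square[of \<beta>])
lemma nsq_tseng: fixes a b c :: "'a::real_inner"
  shows "norm c^2 = norm a^2 - norm (a-b)^2 + norm (c-b)^2 - 2 * inner (a - c) b"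
  by (simp add: power2_norm_eq_inner inner_diff_left inner_diff_right inner_add_left inner_add_right inner_commute algebra_simps power2_eq_square[of \<beta>])
lemma nsq_lower: fixes a b :: "'a::real_inner"
  assumes "0 \<le> \<beta>"
  shows "norm (a - \<beta> *\<^sub>R b)^2 \<ge> (1-\<beta>)*norm a^2 + (\<beta>^2-\<beta>)*norm b^2"
proof -
  have e: "norm (a - \<beta> *\<^sub>R b)^2 = norm a^2 - 2*\<beta>*inner a b + \<beta>^2*norm b^2"
    by (simp add: power2_norm_eq_inner inner_diff_left inner_diff_right inner_commute algebra_simps power2_eq_square[of \<beta>])
  have "norm (a-b)^2 = norm a^2 - 2*inner a b + norm b^2"
    by (simp add: power2_norm_eq_inner inner_diff_left inner_diff_right inner_commute algebra_simps power2_eq_square[of \<beta>])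
  hence "2*inner a b \<le> norm a^2 + norm b^2" by (smt (verit) zero_le_power2)
  hence "\<beta>*(2*inner a b) \<le> \<beta>*(norm a^2 + norm b^2)" using assms by (rule mult_left_mono)
  thus ?thesis unfolding e by (simp add: algebra_simps)
qed

lemma gamma_pos:
  fixes \<epsilon> bc :: real
  assumes e: "\<epsilon> > 1" and b: "bc < (3 + 2 * \<epsilon> - sqrt (8 * \<epsilon> + 17)) / (2 * \<epsilon>)" and b0: "0 \<le> bc"
  shows "bc < 1" "\<epsilon>*(1-bc)^2 - \<epsilon>/(1+\<epsilon>)*(bc*(1+bc)) - 2/(1+\<epsilon>) > 0"
proof -
  define sq where "sq = sqrt (8 * \<epsilon> + 17)"
  have s2: "sq * sq = 8*\<epsilon>+17" unfolding sq_def using e by simp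
  have s0: "sq \<ge> 0" unfolding sq_def using e by simp
  have "sq > 3"
  proof (rule ccontr)
    assume "\<not> sq > 3" hence "sq * sq \<le> 3*3" using s0 by (intro mult_mono) auto
    thus False using s2 e by simp
  qed
  have b': "2*\<epsilon>*bc < 3 + 2*\<epsilon> - sq" using b e unfolding sq_def[symmetric] by (simp add: field_simps)
  have "2*\<epsilon>*bc < 2*\<epsilon>*1" using b' \<open>sq>3\<close> by simp
  thus "bc < 1" using e by simp
  define m where "m = 3 + 2*\<epsilon> - 2*\<epsilon>*bc"
  have "sq < m" using b' unfolding m_def by simp
  hence "sq * sq < m*m" using s0 by (intro mult_strict_mono) auto
  hence q: "0 < \<epsilon>^2*bc^2 - (2*\<epsilon>^2+3*\<epsilon>)*bc + \<epsilon>^2+\<epsilon>-2"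
    unfolding s2 m_def by (simp add: algebra_simps power2_eq_square)
  have f1: "(1+\<epsilon>)*(\<epsilon>/(1+\<epsilon>)*(bc*(1+bc))) = \<epsilon>*(bc*(1+bc))" using e by simp
  have f2: "(1+\<epsilon>)*(2/(1+\<epsilon>)) = 2" using e by (simp add: field_simps)
  have f3: "(1+\<epsilon>)*(\<epsilon>*(1-bc)^2) = (\<epsilon>^2*bc^2 - (2*\<epsilon>^2+3*\<epsilon>)*bc + \<epsilon>^2+\<epsilon>-2) + \<epsilon>*(bc*(1+bc)) + 2"
    by (simp add: algebra_simps power2_eq_square)
  have f4: "(1+\<epsilon>)*(\<epsilon>*(1-bc)^2 - \<epsilon>/(1+\<epsilon>)*(bc*(1+bc)) - 2/(1+\<epsilon>))
     = (1+\<epsilon>)*(\<epsilon>*(1-bc)^2) - (1+\<epsilon>)*(\<epsilon>/(1+\<epsilon>)*(bc*(1+bc))) - (1+\<epsilon>)*(2/(1+\<epsilon>))"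
    by (simp add: right_diff_distrib)
  have "(1+\<epsilon>)*(\<epsilon>*(1-bc)^2 - \<epsilon>/(1+\<epsilon>)*(bc*(1+bc)) - 2/(1+\<epsilon>)) > 0"
    unfolding f4 f1 f2 f3 using q by linarith
  thus "\<epsilon>*(1-bc)^2 - \<epsilon>/(1+\<epsilon>)*(bc*(1+bc)) - 2/(1+\<epsilon>) > 0"
    using e by (simp add: zero_less_mult_iff)
qed


lemma cbound:
  fixes \<epsilon> bc b0 b t al :: real
  assumes e: "\<epsilon> > 1" and "0 \<le> b0" "b0 \<le> b" "b \<le> bc" "bc < 1" "0 \<le> t" "t \<le> 1/(1+\<epsilon>)" "0 \<le> al" "al \<le> 1"
  shows "(1-t)*b*(1+b) + t*al*(1+al) + \<epsilon>*(b - b^2)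
         \<le> \<epsilon>*(1-b0) - (\<epsilon>*(1-bc)^2 - \<epsilon>/(1+\<epsilon>)*(bc*(1+bc)) - 2/(1+\<epsilon>))"
proof -
  define T where "T = 1/(1+\<epsilon>)"
  have T1: "1 - T = \<epsilon>/(1+\<epsilon>)" unfolding T_def using e by (simp add: field_simps)
  have "al*(1+al) \<le> 1*(1+1)" using assms by (intro mult_mono) auto
  hence h1: "t*(al*(1+al)) \<le> t*2" using assms by (intro mult_left_mono) auto
  have h2: "\<epsilon>*(1-b0) \<ge> \<epsilon>*(1-b)" using assms by (intro mult_left_mono) auto
  have bb: "b*(1+b) \<le> bc*(1+bc)" using assms by (intro mult_mono) auto
  have "b*(1+b) \<le> 1*(1+1)" using assms by (intro mult_mono) auto
  hence bb2: "b*(1+b) \<le> 2" by simp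
  have h3: "(T - t)*(2 - b*(1+b)) \<ge> 0" using assms bb2 unfolding T_def by auto
  have "(1-bc)^2 \<le> (1-b)^2" using assms by (intro power_mono) auto
  hence h4: "\<epsilon>*(1-bc)^2 \<le> \<epsilon>*(1-b)^2" using e by (intro mult_left_mono) auto
  have "T \<le> 1" unfolding T_def using e by simp
  hence h5: "(1-T)*(b*(1+b)) \<le> (1-T)*(bc*(1+bc))" using bb by (intro mult_left_mono) auto
  have eq: "\<epsilon>*(1-b) - \<epsilon>*(b-b^2) = \<epsilon>*(1-b)^2" by (simp add: algebra_simps power2_eq_square)
  have eq2: "(1-t)*b*(1+b) + 2*t = (1-T)*(b*(1+b)) + 2*T - (T - t)*(2 - b*(1+b))"
    by (simp add: algebra_simps)
  have "(1-t)*b*(1+b) + t*al*(1+al) + \<epsilon>*(b - b^2) \<le> (1-t)*b*(1+b) + 2*t + \<epsilon>*(b - b^2)"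
    using h1 by (simp add: algebra_simps)
  also have "\<dots> \<le> \<epsilon>*(1-b0) - (\<epsilon>*(1-bc)^2 - (1-T)*(bc*(1+bc)) - 2*T)"
    using h2 h3 h4 h5 eq eq2 by linarith
  also have "\<dots> = \<epsilon>*(1-b0) - (\<epsilon>*(1-bc)^2 - \<epsilon>/(1+\<epsilon>)*(bc*(1+bc)) - 2/(1+\<epsilon>))"
    unfolding T1 unfolding T_def by simp
  finally show ?thesis .
qed

lemma lam_conv:
  fixes lam p :: "nat \<Rightarrow> real"
  assumes lb: "\<forall>n\<ge>1. lam n \<ge> m" and ub: "\<forall>n\<ge>1. lam (Suc n) \<le> lam n + p n" and sp: "summable p"
  shows "\<exists>\<Lambda>. \<Lambda> \<ge> m \<and> (\<lambda>k. lam (Suc k)) \<longlonglongrightarrow> \<Lambda>"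
proof -
  define S where "S n = (\<Sum>i<n. p i)" for n
  have S: "S \<longlonglongrightarrow> suminf p" unfolding S_def using summable_LIMSEQ[OF sp] by simp
  hence "Bseq S" using convergent_imp_Bseq convergentI by blast
  then obtain K where K: "\<forall>n. norm (S n) \<le> K" by (auto elim: BseqE)
  define V where "V k = lam (Suc k) - S (Suc k)" for k
  have "decseq V"
  proof (rule decseq_SucI)
    fix k
    have "lam (Suc (Suc k)) \<le> lam (Suc k) + p (Suc k)" using ub by auto
    moreover have "S (Suc (Suc k)) = S (Suc k) + p (Suc k)" unfolding S_def by simp
    ultimately show "V (Suc k) \<le> V k" unfolding V_def by simp
  qed
  moreover have "\<forall>i. m - K \<le> V i"
  proof
    fix i have "lam (Suc i) \<ge> m" using lb by auto
    moreover have "S (Suc i) \<le> K" using K[rule_format, of "Suc i"] by simp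
    ultimately show "m - K \<le> V i" unfolding V_def by simp
  qed
  ultimately obtain l where l: "V \<longlonglongrightarrow> l" by (rule decseq_convergent)
  have "(\<lambda>k. V k + S (Suc k)) \<longlonglongrightarrow> l + suminf p"
    by (intro tendsto_add l LIMSEQ_Suc S)
  hence lim: "(\<lambda>k. lam (Suc k)) \<longlonglongrightarrow> l + suminf p" unfolding V_def by simp
  have "m \<le> l + suminf p" using lim lb by (intro LIMSEQ_le_const) auto
  with lim show ?thesis by blast
qed

lemma sq_tendsto_zero:
  fixes f :: "nat \<Rightarrow> 'a::real_normed_vector"
  assumes "(\<lambda>k. c * (norm (f k))^2) \<longlonglongrightarrow> 0" "c > 0"
  shows "f \<longlonglongrightarrow> 0"
proof -
  have "(\<lambda>k. (1/c) * (c * (norm (f k))^2)) \<longlonglongrightarrow> (1/c) * 0"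
    by (intro tendsto_mult_left assms)
  hence "(\<lambda>k. (norm (f k))^2) \<longlonglongrightarrow> 0" using assms(2) by simp
  hence "(\<lambda>k. sqrt ((norm (f k))^2)) \<longlonglongrightarrow> sqrt 0" by (intro tendsto_real_sqrt)
  hence "(\<lambda>k. norm (f k)) \<longlonglongrightarrow> 0" by simp
  thus ?thesis by (simp add: tendsto_norm_zero_iff)
qed
theorem theorem4p1:
  fixes A :: "'a::{real_inner, complete_space} \<Rightarrow> 'a"
    and B :: "'a \<Rightarrow> 'a set"
    and x w z y :: "nat \<Rightarrow> 'a"
    and lam \<alpha> \<beta> \<theta> \<mu>s p :: "nat \<Rightarrow> real"
    and \<mu> \<epsilon> \<beta>c \<theta>c L r :: real
  assumes mu: "0 < \<mu>" "\<mu> < 1"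
    and lam1: "lam 1 > 0"
    and mus_nonneg: "\<forall>n\<ge>1. \<mu>s n \<ge> 0"
    and p_nonneg: "\<forall>n\<ge>1. p n \<ge> 0"
    and w_def: "\<forall>n\<ge>1. w n = x n + \<alpha> n *\<^sub>R (x n - x (n - 1))"
    and z_def: "\<forall>n\<ge>1. z n = x n + \<beta> n *\<^sub>R (x n - x (n - 1))"
    and y_def: "\<forall>n\<ge>1. in_resolvent B (lam n) (w n - lam n *\<^sub>R A (w n)) (y n)"
    and lam_def: "\<forall>n\<ge>1. lam (Suc n) =
        (if A (w n) \<noteq> A (y n)
         then min ((\<mu>s n + \<mu>) * norm (w n - y n) / norm (A (w n) - A (y n))) (lam n + p n)
         else lam n + p n)"
    and no_stop: "\<forall>n\<ge>1. w n \<noteq> y n"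
    and x_def: "\<forall>n\<ge>1. x (Suc n) =
        (1 - \<theta> n) *\<^sub>R z n + \<theta> n *\<^sub>R (y n - lam n *\<^sub>R (A (y n) - A (w n)))"
    and C1: "zeros_sum A B \<noteq> {}"
    and eps: "\<epsilon> > 1"
    and C3i: "\<forall>n\<ge>1. 0 \<le> \<alpha> n \<and> \<alpha> n \<le> 1"
    and C3ii: "\<forall>n\<ge>1. 0 \<le> \<beta> n \<and> \<beta> n \<le> \<beta> (Suc n) \<and> \<beta> (Suc n) \<le> \<beta>c"
    and C3ii': "\<beta>c < (3 + 2 * \<epsilon> - sqrt (8 * \<epsilon> + 17)) / (2 * \<epsilon>)"
    and C3iii: "\<forall>n\<ge>1. 0 < \<theta>c \<and> \<theta>c < \<theta> n \<and> \<theta> n \<le> \<theta> (Suc n) \<and> \<theta> (Suc n) \<le> 1 / (1 + \<epsilon>)"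
    and C3iv: "\<forall>n\<ge>1. (1 - \<theta> n) * \<beta> n + \<theta> n * \<alpha> n
                  \<le> (1 - \<theta> (Suc n)) * \<beta> (Suc n) + \<theta> (Suc n) * \<alpha> (Suc n)"
    and C3v: "summable p" "\<mu>s \<longlonglongrightarrow> 0"
    and AB: "(L-lipschitz_on UNIV A \<and> strongly_monotone_op r A \<and> maximal_monotone B)
           \<or> (L-lipschitz_on UNIV A \<and> monotone_op A \<and> maximal_monotone B
              \<and> strongly_monotone_setop r B)"
    and r_pos: "r > 0"
  shows "\<exists>q \<in> zeros_sum A B. x \<longlonglongrightarrow> q"
proof -
  obtain q where q: "q \<in> zeros_sum A B" using C1 by blast
  then obtain v0 where v0: "v0 \<in> B q" "A q + v0 = 0" unfolding zeros_sum_def by blast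
  have v0': "v0 = - A q" using v0(2) by (simp add: eq_neg_iff_add_eq_0 add.commute)
  have Llip: "L-lipschitz_on UNIV A" using AB by blast
  have L0: "0 \<le> L" using Llip lipschitz_on_nonneg by blast
  have Alip: "norm (A a - A b) \<le> L * norm (a - b)" for a b
    using lipschitz_onD[OF Llip] by (simp add: dist_norm)
  have b0: "\<beta> n \<ge> 0" "\<beta> n \<le> \<beta>c" if "n \<ge> 1" for n
    using C3ii that by (auto intro: order_trans)
  have bc0: "\<beta>c \<ge> 0" using b0[of 1] by simp
  have bc1: "\<beta>c < 1" using gamma_pos(1)[OF eps C3ii' bc0] .
  define \<gamma> where "\<gamma> = \<epsilon>*(1-\<beta>c)^2 - \<epsilon>/(1+\<epsilon>)*(\<beta>c*(1+\<beta>c)) - 2/(1+\<epsilon>)"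
  have \<gamma>0: "\<gamma> > 0" unfolding \<gamma>_def using gamma_pos(2)[OF eps C3ii' bc0] .
  have th: "0 < \<theta>c" "\<theta>c < \<theta> n" "\<theta> n \<le> 1/(1+\<epsilon>)" if "n \<ge> 1" for n
    using C3iii that by (auto intro: order_trans)
  define m where "m = min (lam 1) (\<mu>/(L+1))"
  have m0: "m > 0" unfolding m_def using lam1 mu L0 by simp
  have lamstep: "lam (Suc n) \<ge> m" if "n \<ge> 1" "lam n \<ge> m" for n
  proof (cases "A (w n) = A (y n)")
    case True
    then show ?thesis using lam_def p_nonneg that by auto
  next
    case False
    define N where "N = norm (A (w n) - A (y n))"
    define W where "W = norm (w n - y n)"
    have N0: "N > 0" unfolding N_def using False by simp
    have W0: "W > 0" unfolding W_def using no_stop that by simp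
    have NW: "N \<le> (L+1)*W" unfolding N_def W_def using Alip[of "w n" "y n"] W0 W_def
      by (smt (verit) mult_right_mono)
    have "\<mu>/(L+1) = \<mu>*W/((L+1)*W)" using W0 by simp
    also have "\<dots> \<le> \<mu>*W/N" using N0 NW mu W0 by (intro frac_le) auto
    also have "\<dots> \<le> (\<mu>s n + \<mu>)*W/N" using N0 W0 mus_nonneg that
      by (intro divide_right_mono mult_right_mono) auto
    finally have "m \<le> (\<mu>s n + \<mu>)*W/N" unfolding m_def by simp
    moreover have "m \<le> lam n + p n" using that p_nonneg by auto
    ultimately show ?thesis using lam_def that False unfolding N_def W_def by auto
  qed
  have lamlb: "\<forall>n\<ge>1. lam n \<ge> m"
  proof -
    have lk: "lam (Suc k) \<ge> m" for k
    proof (induction k)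
      case 0 thus ?case unfolding m_def by simp
    next
      case (Suc k) thus ?case using lamstep[of "Suc k"] by simp
    qed
    show ?thesis
    proof (intro allI impI)
      fix n :: nat assume "n \<ge> 1"
      then obtain k where "n = Suc k" using Suc_le_D by auto
      thus "lam n \<ge> m" using lk by simp
    qed
  qed
  have lampos: "lam n > 0" if "n \<ge> 1" for n
  proof -
    have "lam n \<ge> m" using lamlb that by blast
    thus ?thesis using m0 by linarith
  qed
  have lameq: "lam (Suc n) = (if A (w n) \<noteq> A (y n)
         then min ((\<mu>s n + \<mu>) * norm (w n - y n) / norm (A (w n) - A (y n))) (lam n + p n)
         else lam n + p n)" if "n \<ge> 1" for n using lam_def that by blast
  have lamub: "\<forall>n\<ge>1. lam (Suc n) \<le> lam n + p n"
  proof (intro allI impI)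
    fix n :: nat assume n: "n \<ge> 1"
    show "lam (Suc n) \<le> lam n + p n" unfolding lameq[OF n] by simp
  qed
  have lamL: "lam (Suc n) * norm (A (w n) - A (y n)) \<le> (\<mu>s n + \<mu>) * norm (w n - y n)"
    if "n \<ge> 1" for n
  proof (cases "A (w n) = A (y n)")
    case True
    then show ?thesis using mus_nonneg mu that by simp
  next
    case False
    hence N0: "norm (A (w n) - A (y n)) > 0" by simp
    have "lam (Suc n) \<le> (\<mu>s n + \<mu>) * norm (w n - y n) / norm (A (w n) - A (y n))"
      unfolding lameq[OF that] using False by simp
    thus ?thesis using N0 by (simp add: pos_le_divide_eq)
  qed
  obtain \<Lambda> where \<Lambda>: "\<Lambda> \<ge> m" "(\<lambda>k. lam (Suc k)) \<longlonglongrightarrow> \<Lambda>"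
    using lam_conv[OF lamlb lamub C3v(1)] by blast
  define \<kappa> where "\<kappa> = (1+\<mu>)/2"
  have \<kappa>: "\<mu> < \<kappa>" "\<kappa> < 1" "0 < \<kappa>" unfolding \<kappa>_def using mu by auto
  have l2: "(\<lambda>k. lam (Suc (Suc k))) \<longlonglongrightarrow> \<Lambda>" using LIMSEQ_Suc[OF \<Lambda>(2)] .
  have \<Lambda>0: "\<Lambda> \<noteq> 0" using \<Lambda>(1) m0 by simp
  have l3: "(\<lambda>k. lam (Suc k) / lam (Suc (Suc k))) \<longlonglongrightarrow> \<Lambda>/\<Lambda>"
    by (rule tendsto_divide[OF \<Lambda>(2) l2 \<Lambda>0])
  have l4: "(\<lambda>k. \<mu>s (Suc k) + \<mu>) \<longlonglongrightarrow> 0 + \<mu>"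
    by (rule tendsto_add[OF LIMSEQ_Suc[OF C3v(2)] tendsto_const])
  have "(\<lambda>k. lam (Suc k) / lam (Suc (Suc k)) * (\<mu>s (Suc k) + \<mu>)) \<longlonglongrightarrow> \<Lambda>/\<Lambda> * (0 + \<mu>)"
    by (rule tendsto_mult[OF l3 l4])
  hence "(\<lambda>k. lam (Suc k) / lam (Suc (Suc k)) * (\<mu>s (Suc k) + \<mu>)) \<longlonglongrightarrow> \<mu>"
    using \<Lambda>0 by simp
  from order_tendstoD(2)[OF this \<kappa>(1)] obtain N0 where
    N0: "\<forall>k\<ge>N0. lam (Suc k) / lam (Suc (Suc k)) * (\<mu>s (Suc k) + \<mu>) < \<kappa>"
    unfolding eventually_sequentially by blast
  define N1 where "N1 = Suc N0"
  have lamk: "lam n * norm (A (w n) - A (y n)) \<le> \<kappa> * norm (w n - y n)" if "n \<ge> N1" for n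
  proof -
    define k where "k = n - 1"
    have k: "n = Suc k" "k \<ge> N0" using that unfolding N1_def k_def by auto
    have n1: "n \<ge> 1" using k by simp
    have lp: "lam n > 0" "lam (Suc n) > 0" using lampos n1 by auto
    have "lam n * norm (A (w n) - A (y n)) = lam n / lam (Suc n) * (lam (Suc n) * norm (A (w n) - A (y n)))"
      using lp by simp
    also have "\<dots> \<le> lam n / lam (Suc n) * ((\<mu>s n + \<mu>) * norm (w n - y n))"
      using lp lamL[OF n1] by (intro mult_left_mono) auto
    also have "\<dots> = (lam n / lam (Suc n) * (\<mu>s n + \<mu>)) * norm (w n - y n)" by simp
    also have "\<dots> \<le> \<kappa> * norm (w n - y n)"
    proof (rule mult_right_mono)
      show "lam n / lam (Suc n) * (\<mu>s n + \<mu>) \<le> \<kappa>" using N0 k by (simp add: less_imp_le)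
    qed simp
    finally show ?thesis .
  qed
  have KEY: "inner (w n - y n - lam n *\<^sub>R (A (w n) - A (y n))) (y n - q) \<ge> lam n * r * (norm (y n - q))^2"
    if n1: "n \<ge> 1" for n
  proof -
    obtain v where v: "v \<in> B (y n)" "w n - lam n *\<^sub>R A (w n) - y n = lam n *\<^sub>R v"
      using y_def n1 unfolding in_resolvent_def by auto
    have id: "w n - y n - lam n *\<^sub>R (A (w n) - A (y n)) = lam n *\<^sub>R (v - v0) + lam n *\<^sub>R (A (y n) - A q)"
    proof -
      have "lam n *\<^sub>R (v - v0) + lam n *\<^sub>R (A (y n) - A q) = lam n *\<^sub>R v + lam n *\<^sub>R A (y n)"
        unfolding v0' by (simp add: algebra_simps)
      also have "\<dots> = w n - y n - lam n *\<^sub>R (A (w n) - A (y n))"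
        unfolding v(2)[symmetric] by (simp add: algebra_simps)
      finally show ?thesis by simp
    qed
    have lp: "lam n \<ge> 0" using lampos n1 by (simp add: less_imp_le)
    have "inner (v - v0) (y n - q) + inner (A (y n) - A q) (y n - q) \<ge> r * (norm (y n - q))^2"
      using AB
    proof
      assume H: "L-lipschitz_on UNIV A \<and> strongly_monotone_op r A \<and> maximal_monotone B"
      have "inner (v - v0) (y n - q) \<ge> 0" using H v(1) v0(1)
        unfolding maximal_monotone_def monotone_setop_def by blast
      moreover have "inner (A (y n) - A q) (y n - q) \<ge> r * (norm (y n - q))^2"
        using H unfolding strongly_monotone_op_def by blast
      ultimately show ?thesis by simp
    next
      assume H: "L-lipschitz_on UNIV A \<and> monotone_op A \<and> maximal_monotone B \<and> strongly_monotone_setop r B"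
      have "inner (v - v0) (y n - q) \<ge> r * (norm (y n - q))^2" using H v(1) v0(1)
        unfolding strongly_monotone_setop_def by blast
      moreover have "inner (A (y n) - A q) (y n - q) \<ge> 0"
        using H unfolding monotone_op_def by blast
      ultimately show ?thesis by simp
    qed
    hence "lam n * (inner (v - v0) (y n - q) + inner (A (y n) - A q) (y n - q)) \<ge> lam n * (r * (norm (y n - q))^2)"
      using lp by (intro mult_left_mono) auto
    thus ?thesis unfolding id by (simp add: inner_add_left algebra_simps)
  qed
  define u where "u n = y n - lam n *\<^sub>R (A (y n) - A (w n))" for n
  define D where "D n = (1-\<kappa>^2)*(norm (w n - y n))^2 + 2*lam n*r*(norm (y n - q))^2" for n
  have tseng: "(norm (u n - q))^2 \<le> (norm (w n - q))^2 - D n" if n: "n \<ge> N1" for n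
  proof -
    have n1: "n \<ge> 1" using n unfolding N1_def by simp
    have lp: "lam n \<ge> 0" using lampos n1 by (simp add: less_imp_le)
    have e1: "(w n - q) - (y n - q) = w n - y n" by simp
    have e2: "(u n - q) - (y n - q) = lam n *\<^sub>R (A (w n) - A (y n))"
      unfolding u_def by (simp add: algebra_simps)
    have e3: "(w n - q) - (u n - q) = w n - y n - lam n *\<^sub>R (A (w n) - A (y n))"
      unfolding u_def by (simp add: algebra_simps)
    have T: "(norm (u n - q))^2 = (norm (w n - q))^2 - (norm (w n - y n))^2
        + (lam n * norm (A (w n) - A (y n)))^2 - 2 * inner (w n - y n - lam n *\<^sub>R (A (w n) - A (y n))) (y n - q)"
      using nsq_tseng[of "u n - q" "w n - q" "y n - q"] unfolding e1 e2 e3 using lp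
      by (simp add: power_mult_distrib)
    have "(lam n * norm (A (w n) - A (y n)))^2 \<le> (\<kappa> * norm (w n - y n))^2"
      using lamk[OF n] lp by (intro power_mono) auto
    thus ?thesis unfolding T D_def using KEY[OF n1] by (simp add: power_mult_distrib algebra_simps)
  qed
  define G where "G n = (norm (x n - q))^2" for n
  define d where "d n = (norm (x n - x (n-1)))^2" for n
  define a where "a n = (1 - \<theta> n)*\<beta> n + \<theta> n*\<alpha> n" for n
  define c where "c n = (1-\<theta> n)*\<beta> n*(1+\<beta> n) + \<theta> n*\<alpha> n*(1+\<alpha> n) + \<epsilon>*(\<beta> n - (\<beta> n)^2)" for n
  have G0: "G n \<ge> 0" for n unfolding G_def by simp
  have d0: "d n \<ge> 0" for n unfolding d_def by simp
  have lam0: "lam n \<ge> 0" if "n \<ge> 1" for n using lampos that by (simp add: less_imp_le)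
  have \<kappa>2: "1 - \<kappa>^2 > 0" using \<kappa> by (simp add: power_less_one_iff)
  have D0: "D n \<ge> 0" if "n \<ge> 1" for n
    unfolding D_def using \<kappa>2 lam0[OF that] r_pos by simp
  have step: "G (Suc n) \<le> (1 + a n)*G n - a n*G (n-1) + c n*d n - \<epsilon>*(1-\<beta> n)*d (Suc n) - \<theta> n*D n"
    if n: "n \<ge> N1" for n
  proof -
    have n1: "n \<ge> 1" using n unfolding N1_def by simp
    define t where "t = \<theta> n"
    define b where "b = \<beta> n"
    define al where "al = \<alpha> n"
    have t0: "0 < t" "t \<le> 1/(1+\<epsilon>)" using th[OF n1] unfolding t_def by auto
    have "t*(1+\<epsilon>) \<le> 1" using t0 eps by (simp add: le_divide_eq)
    hence et: "\<epsilon>*t \<le> 1 - t" by (simp add: algebra_simps)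
    have bb: "0 \<le> b" using b0[OF n1] unfolding b_def by auto
    define Q where "Q = (norm (z n - u n))^2"
    have Q0: "Q \<ge> 0" unfolding Q_def by simp
    have ex: "x (Suc n) - q = (1-t) *\<^sub>R (z n - q) + t *\<^sub>R (u n - q)"
      unfolding x_def[rule_format, OF n1] u_def t_def by (simp add: algebra_simps)
    have E1: "G (Suc n) = (1-t)*(norm (z n - q))^2 + t*(norm (u n - q))^2 - t*(1-t)*Q"
      unfolding G_def ex Q_def using nsq_comb[where t=t and a="z n - q" and b="u n - q"] by simp
    have ez: "z n - q = (1 - (-b)) *\<^sub>R (x n - q) + (-b) *\<^sub>R (x (n-1) - q)"
      unfolding z_def[rule_format, OF n1] b_def by (simp add: algebra_simps)
    have "(norm (z n - q))^2 = (1 - - b)*(norm (x n - q))^2 + (-b)*(norm (x (n-1) - q))^2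
        - (-b)*(1 - - b)*(norm ((x n - q) - (x (n-1) - q)))^2"
      unfolding ez by (rule nsq_comb)
    hence E2: "(norm (z n - q))^2 = (1+b)*G n - b*G (n-1) + b*(1+b)*d n"
      by (simp add: G_def d_def algebra_simps)
    have ew: "w n - q = (1 - (-al)) *\<^sub>R (x n - q) + (-al) *\<^sub>R (x (n-1) - q)"
      unfolding w_def[rule_format, OF n1] al_def by (simp add: algebra_simps)
    have "(norm (w n - q))^2 = (1 - - al)*(norm (x n - q))^2 + (-al)*(norm (x (n-1) - q))^2
        - (-al)*(1 - - al)*(norm ((x n - q) - (x (n-1) - q)))^2"
      unfolding ew by (rule nsq_comb)
    hence E3: "(norm (w n - q))^2 = (1+al)*G n - al*G (n-1) + al*(1+al)*d n"
      by (simp add: G_def d_def algebra_simps)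
    have E8: "t*(norm (u n - q))^2 \<le> t*(((1+al)*G n - al*G (n-1) + al*(1+al)*d n) - D n)"
      using tseng[OF n] t0 unfolding E3[symmetric] by (intro mult_left_mono) auto
    have ex2: "x (Suc n) - z n = t *\<^sub>R (u n - z n)"
      unfolding x_def[rule_format, OF n1] u_def t_def by (simp add: algebra_simps)
    have E5: "(norm (x (Suc n) - z n))^2 = t^2*Q"
      unfolding ex2 Q_def using t0 by (simp add: power_mult_distrib norm_minus_commute)
    have ex3: "x (Suc n) - z n = (x (Suc n) - x n) - b *\<^sub>R (x n - x (n-1))"
      unfolding z_def[rule_format, OF n1] b_def by (simp add: algebra_simps)
    have E6: "(norm (x (Suc n) - z n))^2 \<ge> (1-b)*d (Suc n) + (b^2-b)*d n"
      unfolding ex3 d_def using nsq_lower[OF bb] by simp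
    have E9: "\<epsilon>*((1-b)*d (Suc n) + (b^2-b)*d n) \<le> \<epsilon>*(t^2*Q)"
      using E6 E5 eps by (intro mult_left_mono) auto
    have "(t*Q)*(\<epsilon>*t) \<le> (t*Q)*(1-t)" using et t0 Q0 by (intro mult_left_mono) auto
    moreover have "t*(1-t)*Q = (t*Q)*(1-t)" "\<epsilon>*(t^2*Q) = (t*Q)*(\<epsilon>*t)"
      by (simp_all add: power2_eq_square algebra_simps)
    ultimately have E7: "\<epsilon>*(t^2*Q) \<le> t*(1-t)*Q" by linarith
    have E1': "G (Suc n) = (1-t)*((1+b)*G n - b*G (n-1) + b*(1+b)*d n) + t*(norm (u n - q))^2 - t*(1-t)*Q"
      using E1 unfolding E2 .
    have fin: "(1-t)*((1+b)*G n - b*G (n-1) + b*(1+b)*d n) + t*(((1+al)*G n - al*G (n-1) + al*(1+al)*d n) - D n)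
        - \<epsilon>*((1-b)*d (Suc n) + (b^2-b)*d n)
      = (1 + a n)*G n - a n*G (n-1) + c n*d n - \<epsilon>*(1-\<beta> n)*d (Suc n) - \<theta> n*D n"
      unfolding a_def c_def t_def b_def al_def by (simp add: algebra_simps)
    show ?thesis using E1' E7 E8 E9 fin by linarith
  qed
  define \<Phi> where "\<Phi> n = G n - a n*G (n-1) + c n*d n" for n
  have Phistep: "\<Phi> (Suc n) \<le> \<Phi> n - \<gamma>*d (Suc n) - \<theta> n*D n" if n: "n \<ge> N1" for n
  proof -
    have n1: "n \<ge> 1" using n unfolding N1_def by simp
    have "a n \<le> a (Suc n)" unfolding a_def using C3iv n1 by blast
    hence am: "a n*G n \<le> a (Suc n)*G n" using G0 by (intro mult_right_mono) auto
    have cb: "c (Suc n) \<le> \<epsilon>*(1-\<beta> n) - \<gamma>"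
      unfolding c_def \<gamma>_def
    proof (rule cbound[OF eps])
      show "0 \<le> \<beta> n" "\<beta> n \<le> \<beta> (Suc n)" "\<beta> (Suc n) \<le> \<beta>c" using C3ii n1 by auto
      show "\<beta>c < 1" by (rule bc1)
      show "0 \<le> \<theta> (Suc n)" "\<theta> (Suc n) \<le> 1/(1+\<epsilon>)" using th[of "Suc n"] by auto
      show "0 \<le> \<alpha> (Suc n)" "\<alpha> (Suc n) \<le> 1" using C3i by auto
    qed
    hence cd: "c (Suc n)*d (Suc n) \<le> (\<epsilon>*(1-\<beta> n) - \<gamma>)*d (Suc n)"
      using d0 by (intro mult_right_mono) auto
    have ph: "\<Phi> (Suc n) = G (Suc n) - a (Suc n)*G n + c (Suc n)*d (Suc n)" unfolding \<Phi>_def by simp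
    have e1: "(\<epsilon>*(1-\<beta> n) - \<gamma>)*d (Suc n) = \<epsilon>*(1-\<beta> n)*d (Suc n) - \<gamma>*d (Suc n)"
      by (simp add: algebra_simps)
    have e2: "(1 + a n)*G n = G n + a n*G n" by (simp add: algebra_simps)
    show ?thesis using step[OF n] am cd ph e1 e2 unfolding \<Phi>_def by linarith
  qed
  have Phidec: "\<Phi> (Suc n) \<le> \<Phi> n" if n: "n \<ge> N1" for n
  proof -
    have n1: "n \<ge> 1" using n unfolding N1_def by simp
    have "\<gamma>*d (Suc n) \<ge> 0" using \<gamma>0 d0 by simp
    moreover have "\<theta> n*D n \<ge> 0" using th[OF n1] D0[OF n1] by simp
    ultimately show ?thesis using Phistep[OF n] by linarith
  qed
  have PhiN: "\<Phi> (N1 + k) \<le> \<Phi> N1" for k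
  proof (induction k)
    case (Suc k) thus ?case using Phidec[of "N1 + k"] by simp
  qed simp
  define ab where "ab = (1 + \<beta>c)/2"
  have ab1: "ab < 1" unfolding ab_def using bc1 by simp
  have aM: "0 \<le> a n" "a n \<le> ab" if n1: "n \<ge> 1" for n
  proof -
    have t: "0 \<le> \<theta> n" "\<theta> n \<le> 1/2"
    proof -
      show "0 \<le> \<theta> n" using th[OF n1] by simp
      have "1/(1+\<epsilon>) \<le> 1/2" using eps by (simp add: field_simps)
      thus "\<theta> n \<le> 1/2" using th[OF n1] by linarith
    qed
    have b: "0 \<le> \<beta> n" "\<beta> n \<le> \<beta>c" using b0[OF n1] by auto
    have al: "0 \<le> \<alpha> n" "\<alpha> n \<le> 1" using C3i n1 by auto
    show "0 \<le> a n" unfolding a_def using t b al by simp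
    have "(1 - \<theta> n)*\<beta> n \<le> (1 - \<theta> n)*\<beta>c" using t b by (intro mult_left_mono) auto
    moreover have "\<theta> n*\<alpha> n \<le> \<theta> n*1" using t al by (intro mult_left_mono) auto
    moreover have "\<theta> n*(1 - \<beta>c) \<le> (1/2)*(1-\<beta>c)" using t bc1 by (intro mult_right_mono) auto
    ultimately show "a n \<le> ab" unfolding a_def ab_def by (simp add: algebra_simps)
  qed
  have c0: "c n \<ge> 0" if n1: "n \<ge> 1" for n
  proof -
    have "1/(1+\<epsilon>) \<le> 1" using eps by simp
    hence t: "0 \<le> \<theta> n" "\<theta> n \<le> 1" using th[OF n1] by auto
    have b: "0 \<le> \<beta> n" "\<beta> n \<le> 1" using b0[OF n1] bc1 by auto
    have al: "0 \<le> \<alpha> n" using C3i n1 by auto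
    have "\<beta> n - (\<beta> n)^2 = \<beta> n*(1 - \<beta> n)" by (simp add: power2_eq_square algebra_simps)
    hence "\<beta> n - (\<beta> n)^2 \<ge> 0" using b by simp
    thus ?thesis unfolding c_def using t b al eps by simp
  qed
  define M where "M = max (G N1) (\<bar>\<Phi> N1\<bar>/(1-ab))"
  have M1: "(1-ab)*M \<ge> \<bar>\<Phi> N1\<bar>"
  proof -
    have "\<bar>\<Phi> N1\<bar>/(1-ab) \<le> M" unfolding M_def by simp
    thus ?thesis using ab1 by (simp add: pos_divide_le_eq mult.commute)
  qed
  have M0: "M \<ge> 0" unfolding M_def using G0[of N1] by simp
  have N11: "N1 \<ge> 1" unfolding N1_def by simp
  have GM: "G (N1 + k) \<le> M" for k
  proof (induction k)
    case 0 thus ?case unfolding M_def by simp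
  next
    case (Suc k)
    define n where "n = Suc (N1 + k)"
    have n1: "n \<ge> 1" unfolding n_def by simp
    have "a n * G (N1 + k) \<le> ab * M" using aM[OF n1] G0 Suc by (intro mult_mono) auto
    moreover have "c n * d n \<ge> 0" using c0[OF n1] d0 by simp
    moreover have "\<Phi> n \<le> \<Phi> N1" using PhiN[of "Suc k"] unfolding n_def by simp
    moreover have "\<Phi> n = G n - a n*G (N1 + k) + c n*d n" unfolding \<Phi>_def n_def by simp
    ultimately have "G n \<le> \<Phi> N1 + ab*M" by linarith
    also have "\<dots> \<le> M" using M1 by (simp add: algebra_simps)
    finally show ?case unfolding n_def by simp
  qed
  define F where "F k = \<Phi> (N1 + k)" for k
  have "decseq F" unfolding F_def by (rule decseq_SucI) (simp add: Phidec)
  moreover have "\<forall>k. min (\<Phi> N1) (- (ab*M)) \<le> F k"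
  proof
    fix k show "min (\<Phi> N1) (- (ab*M)) \<le> F k"
    proof (cases k)
      case 0 thus ?thesis unfolding F_def by simp
    next
      case (Suc j)
      define n where "n = Suc (N1 + j)"
      have n1: "n \<ge> 1" unfolding n_def by simp
      have "a n * G (N1 + j) \<le> ab * M" using aM[OF n1] G0 GM by (intro mult_mono) auto
      moreover have "c n * d n \<ge> 0" using c0[OF n1] d0 by simp
      moreover have "F k = G n - a n*G (N1 + j) + c n*d n" unfolding F_def \<Phi>_def n_def Suc by simp
      ultimately have "F k \<ge> - (ab*M)" using G0[of n] by linarith
      thus ?thesis by simp
    qed
  qed
  ultimately obtain l where l: "F \<longlonglongrightarrow> l" by (rule decseq_convergent)
  have Fd: "(\<lambda>k. F k - F (Suc k)) \<longlonglongrightarrow> l - l" by (intro tendsto_diff l LIMSEQ_Suc)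
  hence Fd0: "(\<lambda>k. F k - F (Suc k)) \<longlonglongrightarrow> 0" by simp
  have bnds: "0 \<le> \<gamma>*d (Suc (N1 + k)) \<and> \<gamma>*d (Suc (N1 + k)) \<le> F k - F (Suc k)
     \<and> 0 \<le> \<theta>c*(1-\<kappa>^2)*(norm (w (N1+k) - y (N1+k)))^2
     \<and> \<theta>c*(1-\<kappa>^2)*(norm (w (N1+k) - y (N1+k)))^2 \<le> F k - F (Suc k)
     \<and> 0 \<le> (\<theta>c*2*m*r)*(norm (y (N1+k) - q))^2
     \<and> (\<theta>c*2*m*r)*(norm (y (N1+k) - q))^2 \<le> F k - F (Suc k)" for k
  proof -
    define n where "n = N1 + k"
    have n: "n \<ge> N1" and n1: "n \<ge> 1" unfolding n_def N1_def by auto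
    have st: "\<gamma>*d (Suc n) + \<theta> n*D n \<le> F k - F (Suc k)"
      using Phistep[OF n] unfolding F_def n_def by simp
    have g: "\<gamma>*d (Suc n) \<ge> 0" using \<gamma>0 d0 by simp
    have tD: "\<theta>c * D n \<le> \<theta> n*D n" using th[OF n1] D0[OF n1] by (intro mult_right_mono) auto
    have W: "0 \<le> (1-\<kappa>^2)*(norm (w n - y n))^2" using \<kappa>2 by simp
    have lm: "m \<le> lam n" using lamlb n1 by blast
    have Y: "0 \<le> 2*m*r*(norm (y n - q))^2" using m0 r_pos by simp
    have "2*m*r*(norm (y n - q))^2 \<le> 2*lam n*r*(norm (y n - q))^2"
      using lm r_pos by (intro mult_right_mono) auto
    hence DY: "2*m*r*(norm (y n - q))^2 \<le> D n" unfolding D_def using W by linarith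
    have DW: "(1-\<kappa>^2)*(norm (w n - y n))^2 \<le> D n" unfolding D_def using lam0[OF n1] r_pos by simp
    have tc: "\<theta>c > 0" using th[OF n1] by simp
    have A1: "\<theta>c*((1-\<kappa>^2)*(norm (w n - y n))^2) \<le> \<theta>c * D n" using DW tc by (intro mult_left_mono) auto
    have A2: "\<theta>c*(2*m*r*(norm (y n - q))^2) \<le> \<theta>c * D n" using DY tc by (intro mult_left_mono) auto
    have A3: "0 \<le> \<theta>c*((1-\<kappa>^2)*(norm (w n - y n))^2)" using W tc by simp
    have A4: "0 \<le> \<theta>c*(2*m*r*(norm (y n - q))^2)" using Y tc by simp
    show ?thesis using st g tD A1 A2 A3 A4 unfolding n_def[symmetric]
      by (simp add: mult.assoc)
  qed
  have T1: "(\<lambda>k. \<gamma>*(norm (x (Suc (N1 + k)) - x (N1 + k)))^2) \<longlonglongrightarrow> 0"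
  proof (rule tendsto_sandwich[OF _ _ tendsto_const Fd0])
    show "\<forall>\<^sub>F k in sequentially. 0 \<le> \<gamma>*(norm (x (Suc (N1 + k)) - x (N1 + k)))^2"
      using \<gamma>0 by simp
    show "\<forall>\<^sub>F k in sequentially. \<gamma>*(norm (x (Suc (N1 + k)) - x (N1 + k)))^2 \<le> F k - F (Suc k)"
      using bnds unfolding d_def by simp
  qed
  have T2: "(\<lambda>k. \<theta>c*(1-\<kappa>^2)*(norm (w (N1+k) - y (N1+k)))^2) \<longlonglongrightarrow> 0"
    by (rule tendsto_sandwich[OF _ _ tendsto_const Fd0]) (use bnds in auto)
  have T3: "(\<lambda>k. (\<theta>c*2*m*r)*(norm (y (N1+k) - q))^2) \<longlonglongrightarrow> 0"
    by (rule tendsto_sandwich[OF _ _ tendsto_const Fd0]) (use bnds in auto)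
  have tc: "\<theta>c > 0" using th[OF N11] by simp
  have X1: "(\<lambda>k. x (Suc (N1 + k)) - x (N1 + k)) \<longlonglongrightarrow> 0"
    by (rule sq_tendsto_zero[OF T1 \<gamma>0])
  have X2: "(\<lambda>k. w (N1+k) - y (N1+k)) \<longlonglongrightarrow> 0"
    by (rule sq_tendsto_zero[OF T2]) (use tc \<kappa>2 in simp)
  have X3: "(\<lambda>k. y (N1+k) - q) \<longlonglongrightarrow> 0"
    by (rule sq_tendsto_zero[OF T3]) (use tc m0 r_pos in simp)
  have X2': "(\<lambda>k. w (Suc (N1+k)) - y (Suc (N1+k))) \<longlonglongrightarrow> 0" using LIMSEQ_Suc[OF X2] by simp
  have X3': "(\<lambda>k. y (Suc (N1+k)) - q) \<longlonglongrightarrow> 0" using LIMSEQ_Suc[OF X3] by simp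
  have X4: "(\<lambda>k. x (Suc (N1+k)) - w (Suc (N1+k))) \<longlonglongrightarrow> 0"
  proof (rule Lim_null_comparison[OF _ tendsto_norm_zero[OF X1]])
    show "\<forall>\<^sub>F k in sequentially. norm (x (Suc (N1+k)) - w (Suc (N1+k))) \<le> norm (x (Suc (N1 + k)) - x (N1 + k))"
    proof (rule always_eventually, rule allI)
      fix k
      define n where "n = Suc (N1 + k)"
      have n1: "n \<ge> 1" unfolding n_def by simp
      have "x n - w n = - (\<alpha> n *\<^sub>R (x n - x (n-1)))" using w_def n1 by simp
      hence "norm (x n - w n) = \<bar>\<alpha> n\<bar> * norm (x n - x (n-1))" by simp
      also have "\<dots> \<le> 1 * norm (x n - x (n-1))" using C3i n1 by (intro mult_right_mono) auto
      finally show "norm (x (Suc (N1+k)) - w (Suc (N1+k))) \<le> norm (x (Suc (N1 + k)) - x (N1 + k))"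
        unfolding n_def by simp
    qed
  qed
  have "(\<lambda>k. (x (Suc (N1+k)) - w (Suc (N1+k))) + (w (Suc (N1+k)) - y (Suc (N1+k))) + (y (Suc (N1+k)) - q) + q)
        \<longlonglongrightarrow> 0 + 0 + 0 + q"
    by (intro tendsto_add X4 X2' X3' tendsto_const)
  hence "(\<lambda>k. x (k + Suc N1)) \<longlonglongrightarrow> q" by (simp add: add.commute)
  hence "x \<longlonglongrightarrow> q" by (rule LIMSEQ_offset)
  thus ?thesis using q by blast
qed

end
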